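(* (i) For every finite universe $U$, nested initial configurations and tie-breaking order as in the context, and every request sequence $\sigma$ over $U$, the position sequence $h_1,h_2,\dots$ of $\sigma$ satisfies the repeat property. (ii) Conversely, for every finite sequence $h_1,\dots,h_T$ of positive integers satisfying the repeat property, there exist a finite universe, initial configurations and a tie-breaking order as in the context, and a request sequence whose position sequence is $h_1,\dots,h_T$.
   Context: Unweighted paging over a finite universe $U$ of $n$ pages, request sequence $\sigma=(\sigma_1,\sigma_2,\dots)$. Fix a total order on $U$ for tie-breaking and nested initial configurations $\emptyset=C^0_0\subset C^1_0\subset\dots\subset C^n_0=U$ with $|C^m_0|=m$. For $1\le m\le n$, $\mathrm{FiF}^m$ is Belady's Farthest-in-Future algorithm with cache size $m$ started at $C^m_0$: on a request to a page not in its cache, it loads it and evicts the cached page whose next request is latest (never-requested-again pages count as latest; ties broken by the fixed order), and otherwise does nothing. Let $C^m_t$ be its cache after serving $\sigma_1,\dots,\sigma_t$, $C^0_t=\emptyset$; these satisfy $C^{m-1}_t\subset C^m_t$. The Belady ranking at time $t$ places the unique page of $C^m_t\setminus C^{m-1}_t$ at position $m$. The position sequence of $\sigma$ is $h_t:=$ the position of $\sigma_t$ in the Belady ranking at time $t-1$. A sequence $h_1,h_2,\dots$ of positive integers has the repeat property if for all $t_1<t_2$ with $h_{t_1}=h_{t_2}$ we have $\{2,3,\dots,h_{t_1}-1\}\subseteq\{h_{t_1+1},\dots,h_{t_2-1}\}$. *)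

theory Defs
  imports Main "HOL-Library.Extended_Nat"
begin

text \<open>Requests are indexed from time 1; the request sequence sigma has horizon N :: enat
  (N = \<infinity> for an infinite sequence, N = T for a finite sequence sigma_1..sigma_T).
  Values sigma s for s = 0 or s > N are irrelevant.\<close>

definition request_seq :: "'a set \<Rightarrow> (nat \<Rightarrow> 'a) \<Rightarrow> enat \<Rightarrow> bool" where
  "request_seq U \<sigma> N \<longleftrightarrow> (\<forall>s. 1 \<le> s \<and> enat s \<le> N \<longrightarrow> \<sigma> s \<in> U)"

text \<open>Setup: finite universe U, a total order on U given by an injective rank function rk
  (smaller rank = earlier in the order), and nested initial configurations C0 0 .. C0 n.\<close>

definition paging_setup :: "'a set \<Rightarrow> ('a \<Rightarrow> nat) \<Rightarrow> (nat \<Rightarrow> 'a set) \<Rightarrow> bool" where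
  "paging_setup U rk C0 \<longleftrightarrow> finite U \<and> inj_on rk U \<and> C0 0 = {}
     \<and> (\<forall>m < card U. C0 m \<subset> C0 (Suc m))
     \<and> (\<forall>m \<le> card U. card (C0 m) = m) \<and> C0 (card U) = U"

definition next_req :: "(nat \<Rightarrow> 'a) \<Rightarrow> enat \<Rightarrow> nat \<Rightarrow> 'a \<Rightarrow> enat" where
  "next_req \<sigma> N t p =
     (if \<exists>s. t < s \<and> enat s \<le> N \<and> \<sigma> s = p
      then enat (LEAST s. t < s \<and> enat s \<le> N \<and> \<sigma> s = p) else \<infinity>)"

definition victim :: "(nat \<Rightarrow> 'a) \<Rightarrow> enat \<Rightarrow> ('a \<Rightarrow> nat) \<Rightarrow> nat \<Rightarrow> 'a set \<Rightarrow> 'a" where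
  "victim \<sigma> N rk t C =
     (THE q. q \<in> C \<and> (\<forall>q'\<in>C. next_req \<sigma> N t q' < next_req \<sigma> N t q
                          \<or> (next_req \<sigma> N t q' = next_req \<sigma> N t q \<and> rk q \<le> rk q')))"

fun fif :: "(nat \<Rightarrow> 'a) \<Rightarrow> enat \<Rightarrow> ('a \<Rightarrow> nat) \<Rightarrow> 'a set \<Rightarrow> nat \<Rightarrow> 'a set" where
  "fif \<sigma> N rk Cinit 0 = Cinit"
| "fif \<sigma> N rk Cinit (Suc t) =
     (let C = fif \<sigma> N rk Cinit t; p = \<sigma> (Suc t) in
      if p \<in> C then C else insert p (C - {victim \<sigma> N rk (Suc t) C}))"

definition cache :: "(nat \<Rightarrow> 'a) \<Rightarrow> enat \<Rightarrow> ('a \<Rightarrow> nat) \<Rightarrow> (nat \<Rightarrow> 'a set) \<Rightarrow> nat \<Rightarrow> nat \<Rightarrow> 'a set" where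
  "cache \<sigma> N rk C0 m t = (if m = 0 then {} else fif \<sigma> N rk (C0 m) t)"

definition belady_pos :: "'a set \<Rightarrow> (nat \<Rightarrow> 'a) \<Rightarrow> enat \<Rightarrow> ('a \<Rightarrow> nat) \<Rightarrow> (nat \<Rightarrow> 'a set) \<Rightarrow> nat \<Rightarrow> 'a \<Rightarrow> nat" where
  "belady_pos U \<sigma> N rk C0 t p =
     (THE m. 1 \<le> m \<and> m \<le> card U \<and> p \<in> cache \<sigma> N rk C0 m t \<and> p \<notin> cache \<sigma> N rk C0 (m - 1) t)"

definition position_seq :: "'a set \<Rightarrow> ('a \<Rightarrow> nat) \<Rightarrow> (nat \<Rightarrow> 'a set) \<Rightarrow> (nat \<Rightarrow> 'a) \<Rightarrow> enat \<Rightarrow> nat \<Rightarrow> nat" where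
  "position_seq U rk C0 \<sigma> N t = belady_pos U \<sigma> N rk C0 (t - 1) (\<sigma> t)"

definition repeat_property :: "(nat \<Rightarrow> nat) \<Rightarrow> enat \<Rightarrow> bool" where
  "repeat_property h N \<longleftrightarrow>
     (\<forall>t1 t2. 1 \<le> t1 \<and> t1 < t2 \<and> enat t2 \<le> N \<and> h t1 = h t2 \<longrightarrow>
        {2..<h t1} \<subseteq> {h s | s. t1 < s \<and> s < t2})"

end

theory Submission
  imports Defs
begin


lemma nr_enat_D:
  assumes "next_req \<sigma> N t q = enat s"
  shows "t < s \<and> enat s \<le> N \<and> \<sigma> s = q"
proof -
  have ex: "\<exists>s. t < s \<and> enat s \<le> N \<and> \<sigma> s = q"
    using assms by (auto simp: next_req_def split: if_splits)
  then have "s = (LEAST s. t < s \<and> enat s \<le> N \<and> \<sigma> s = q)"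
    using assms by (auto simp: next_req_def)
  then show ?thesis using LeastI_ex[OF ex] by simp
qed

lemma nr_le:
  assumes "t < s" "enat s \<le> N" "\<sigma> s = q"
  shows "next_req \<sigma> N t q \<le> enat s"
proof -
  have ex: "\<exists>s. t < s \<and> enat s \<le> N \<and> \<sigma> s = q" using assms by blast
  have "(LEAST s. t < s \<and> enat s \<le> N \<and> \<sigma> s = q) \<le> s"
    by (rule Least_le) (use assms in auto)
  then show ?thesis using ex by (simp add: next_req_def)
qed

lemma nr_ge:
  assumes "\<And>s. t < s \<Longrightarrow> s < s0 \<Longrightarrow> \<sigma> s \<noteq> q"
  shows "enat s0 \<le> next_req \<sigma> N t q"
proof (cases "next_req \<sigma> N t q")
  case (enat s)
  then have "t < s \<and> enat s \<le> N \<and> \<sigma> s = q" by (rule nr_enat_D)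
  then have "\<not> s < s0" using assms by blast
  then show ?thesis using enat by simp
next
  case infinity
  then show ?thesis by simp
qed

lemma nr_Suc:
  assumes "\<sigma> (Suc t) \<noteq> q"
  shows "next_req \<sigma> N (Suc t) q = next_req \<sigma> N t q"
proof -
  have "(\<lambda>s. Suc t < s \<and> enat s \<le> N \<and> \<sigma> s = q) = (\<lambda>s. t < s \<and> enat s \<le> N \<and> \<sigma> s = q)"
    using assms by (auto simp: fun_eq_iff) (metis Suc_lessI)
  then show ?thesis unfolding next_req_def by (simp only:)
qed

lemma nr_req:
  assumes "enat (Suc t) \<le> N"
  shows "next_req \<sigma> N t (\<sigma> (Suc t)) = enat (Suc t)"
proof (rule antisym)
  show "next_req \<sigma> N t (\<sigma> (Suc t)) \<le> enat (Suc t)" by (rule nr_le) (use assms in auto)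
  show "enat (Suc t) \<le> next_req \<sigma> N t (\<sigma> (Suc t))" by (rule nr_ge) auto
qed

lemma nr_inf:
  "next_req \<sigma> N t q = \<infinity> \<longleftrightarrow> \<not>(\<exists>s. t < s \<and> enat s \<le> N \<and> \<sigma> s = q)"
  unfolding next_req_def by auto

definition kle :: "(nat \<Rightarrow> 'a) \<Rightarrow> enat \<Rightarrow> ('a \<Rightarrow> nat) \<Rightarrow> nat \<Rightarrow> 'a \<Rightarrow> 'a \<Rightarrow> bool" where
  "kle \<sigma> N rk t a b \<longleftrightarrow> next_req \<sigma> N t a < next_req \<sigma> N t b
      \<or> (next_req \<sigma> N t a = next_req \<sigma> N t b \<and> rk b \<le> rk a)"

lemma kle_refl: "kle \<sigma> N rk t a a" by (simp add: kle_def)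

lemma kle_trans: "kle \<sigma> N rk t a b \<Longrightarrow> kle \<sigma> N rk t b c \<Longrightarrow> kle \<sigma> N rk t a c"
  unfolding kle_def by (auto elim: order.strict_trans)

lemma kle_total: "\<not> kle \<sigma> N rk t a b \<Longrightarrow> kle \<sigma> N rk t b a"
  unfolding kle_def by auto

lemma kle_antisym: "kle \<sigma> N rk t a b \<Longrightarrow> kle \<sigma> N rk t b a \<Longrightarrow> rk a = rk b"
  unfolding kle_def by auto

lemma victim_eq:
  assumes "inj_on rk C" "v \<in> C" "\<forall>q\<in>C. kle \<sigma> N rk t q v"
  shows "victim \<sigma> N rk t C = v"
  unfolding victim_def
proof (rule the_equality)
  show "v \<in> C \<and> (\<forall>q'\<in>C. next_req \<sigma> N t q' < next_req \<sigma> N t v \<or>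
          next_req \<sigma> N t q' = next_req \<sigma> N t v \<and> rk v \<le> rk q')"
    using assms(2,3) by (simp add: kle_def)
next
  fix w assume w: "w \<in> C \<and> (\<forall>q'\<in>C. next_req \<sigma> N t q' < next_req \<sigma> N t w \<or>
          next_req \<sigma> N t q' = next_req \<sigma> N t w \<and> rk w \<le> rk q')"
  then have "kle \<sigma> N rk t v w" using assms(2) by (simp add: kle_def)
  moreover have "kle \<sigma> N rk t w v" using assms(3) w by blast
  ultimately have "rk w = rk v" using kle_antisym by metis
  then show "w = v" using assms(1,2) w by (meson inj_on_def)
qed

lemma kmax_ex:
  assumes "finite C" "C \<noteq> {}"
  shows "\<exists>v\<in>C. \<forall>q\<in>C. kle \<sigma> N rk t q v"
  using assms
proof (induction C rule: finite_ne_induct)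
  case (singleton x) then show ?case by (simp add: kle_refl)
next
  case (insert x F)
  then obtain v where v: "v \<in> F" "\<forall>q\<in>F. kle \<sigma> N rk t q v" by blast
  show ?case
  proof (cases "kle \<sigma> N rk t v x")
    case True
    have "\<forall>q\<in>insert x F. kle \<sigma> N rk t q x"
      using v True by (auto intro: kle_trans[of _ _ _ _ _ v x] kle_refl)
    then show ?thesis by blast
  next
    case False
    then have "kle \<sigma> N rk t x v" by (rule kle_total)
    then show ?thesis using v by auto
  qed
qed

lemma victim_max:
  assumes "finite C" "C \<noteq> {}" "inj_on rk C"
  shows "victim \<sigma> N rk t C \<in> C \<and> (\<forall>q\<in>C. kle \<sigma> N rk t q (victim \<sigma> N rk t C))"
proof -
  obtain v where v: "v \<in> C" "\<forall>q\<in>C. kle \<sigma> N rk t q v" using kmax_ex[OF assms(1,2)] by blast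
  then have "victim \<sigma> N rk t C = v" using victim_eq[OF assms(3)] by blast
  then show ?thesis using v by simp
qed


locale pg =
  fixes U :: "'a set" and rk :: "'a \<Rightarrow> nat" and C0 :: "nat \<Rightarrow> 'a set"
    and \<sigma> :: "nat \<Rightarrow> 'a" and N :: enat
  assumes ps: "paging_setup U rk C0" and rs: "request_seq U \<sigma> N"
begin

abbreviation "n \<equiv> card U"
abbreviation "C m t \<equiv> cache \<sigma> N rk C0 m t"
abbreviation "K t \<equiv> kle \<sigma> N rk t"
abbreviation "V t X \<equiv> victim \<sigma> N rk t X"

lemma finU: "finite U" and injU: "inj_on rk U" and C00: "C0 0 = {}"
  and C0sub: "\<And>m. m < n \<Longrightarrow> C0 m \<subset> C0 (Suc m)"
  and C0card: "\<And>m. m \<le> n \<Longrightarrow> card (C0 m) = m" and C0n: "C0 n = U"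
  using ps unfolding paging_setup_def by auto

lemma C0_mono: "m \<le> m' \<Longrightarrow> m' \<le> n \<Longrightarrow> C0 m \<subseteq> C0 m'"
proof (induction m' rule: nat.induct)
  case zero then show ?case by simp
next
  case (Suc k)
  show ?case
  proof (cases "m = Suc k")
    case False
    then have "C0 m \<subseteq> C0 k" using Suc by simp
    then show ?thesis using C0sub[of k] Suc by auto
  qed simp
qed

lemma req_U: "1 \<le> s \<Longrightarrow> enat s \<le> N \<Longrightarrow> \<sigma> s \<in> U"
  using rs unfolding request_seq_def by blast

lemma C_0[simp]: "C 0 t = {}" by (simp add: cache_def)

lemma C_init: "C m 0 = C0 m"
  by (cases "m = 0") (auto simp: cache_def C00)

lemma C_Suc: "0 < m \<Longrightarrow> C m (Suc t) = (if \<sigma> (Suc t) \<in> C m t then C m t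
    else insert (\<sigma> (Suc t)) (C m t - {V (Suc t) (C m t)}))"
  by (simp add: cache_def Let_def)

definition inv :: "nat \<Rightarrow> bool" where
  "inv t \<longleftrightarrow> (\<forall>m\<le>n. C m t \<subseteq> U \<and> card (C m t) = m) \<and> (\<forall>m<n. C m t \<subseteq> C (Suc m) t)"

lemma inv0: "inv 0"
proof -
  have "\<forall>m\<le>n. C0 m \<subseteq> U \<and> card (C0 m) = m" using C0_mono[of _ n] C0n C0card by simp
  moreover have "\<forall>m<n. C0 m \<subseteq> C0 (Suc m)" using C0sub by auto
  ultimately show ?thesis unfolding inv_def C_init by simp
qed

lemma inv_mono: "inv t \<Longrightarrow> m \<le> m' \<Longrightarrow> m' \<le> n \<Longrightarrow> C m t \<subseteq> C m' t"
proof (induction m' rule: nat.induct)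
  case zero then show ?case by simp
next
  case (Suc k)
  show ?case
  proof (cases "m = Suc k")
    case False
    then have a: "C m t \<subseteq> C k t" using Suc by simp
    have "k < n" using Suc.prems by simp
    then have "C k t \<subseteq> C (Suc k) t" using Suc.prems(1) unfolding inv_def by blast
    then show ?thesis using a by blast
  qed simp
qed

lemma inv_sub: "inv t \<Longrightarrow> m \<le> n \<Longrightarrow> C m t \<subseteq> U"
  and inv_card: "inv t \<Longrightarrow> m \<le> n \<Longrightarrow> card (C m t) = m"
  unfolding inv_def by auto

lemma inv_fin: "inv t \<Longrightarrow> m \<le> n \<Longrightarrow> finite (C m t)"
  using inv_sub finU finite_subset by blast

lemma inv_n: "inv t \<Longrightarrow> C n t = U"
  using inv_sub[of t n] inv_card[of t n] finU by (simp add: card_subset_eq)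

lemma vmax: "inv t \<Longrightarrow> 1 \<le> m \<Longrightarrow> m \<le> n \<Longrightarrow>
   V s (C m t) \<in> C m t \<and> (\<forall>q\<in>C m t. K s q (V s (C m t)))"
proof -
  assume a: "inv t" "1 \<le> m" "m \<le> n"
  have "C m t \<noteq> {}" using inv_card[OF a(1,3)] a(2) by auto
  moreover have "inj_on rk (C m t)" using injU inv_sub[OF a(1,3)] inj_on_subset by blast
  ultimately show ?thesis using victim_max inv_fin[OF a(1,3)] by blast
qed

lemma vsub: "inv t \<Longrightarrow> 1 \<le> m \<Longrightarrow> m \<le> m' \<Longrightarrow> m' \<le> n \<Longrightarrow> V s (C m' t) \<in> C m t
   \<Longrightarrow> V s (C m' t) = V s (C m t)"
proof -
  assume a: "inv t" "1 \<le> m" "m \<le> m'" "m' \<le> n" "V s (C m' t) \<in> C m t"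
  have "1 \<le> m'" using a by simp
  then have "\<forall>q\<in>C m' t. K s q (V s (C m' t))" using vmax[OF a(1) _ a(4)] by blast
  then have "\<forall>q\<in>C m t. K s q (V s (C m' t))" using inv_mono[OF a(1,3,4)] by blast
  moreover have "C m t \<subseteq> U" using inv_sub[OF a(1), of m] a(3,4) by simp
  then have "inj_on rk (C m t)" using injU inj_on_subset by blast
  ultimately show ?thesis using victim_eq[of rk "C m t" "V s (C m' t)"] a(5) by simp
qed

lemma inv_step:
  assumes I: "inv t" and tN: "enat (Suc t) \<le> N"
  shows "inv (Suc t)"
proof -
  define p where "p = \<sigma> (Suc t)"
  have pU: "p \<in> U" using req_U[OF _ tN] p_def by simp
  have A: "C m (Suc t) \<subseteq> U \<and> card (C m (Suc t)) = m" if m: "m \<le> n" for m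
  proof (cases "m = 0")
    case False
    show ?thesis
    proof (cases "p \<in> C m t")
      case True
      then show ?thesis using C_Suc[of m t] False p_def inv_sub[OF I m] inv_card[OF I m] by simp
    next
      case pn: False
      have v: "V (Suc t) (C m t) \<in> C m t" using vmax[OF I _ m] False by simp
      have fin: "finite (C m t)" using inv_fin[OF I m] .
      have "C m (Suc t) = insert p (C m t - {V (Suc t) (C m t)})"
        using C_Suc[of m t] False pn p_def by simp
      moreover have "card (insert p (C m t - {V (Suc t) (C m t)})) = m"
        using pn fin v inv_card[OF I m] False by (simp add: card_Suc_Diff1)
      ultimately show ?thesis using pU inv_sub[OF I m] by auto
    qed
  qed simp
  have B: "C m (Suc t) \<subseteq> C (Suc m) (Suc t)" if m: "m < n" for m
  proof (cases "m = 0")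
    case False
    have sub: "C m t \<subseteq> C (Suc m) t" using I m unfolding inv_def by blast
    show ?thesis
    proof (cases "p \<in> C m t")
      case True
      then show ?thesis using C_Suc[of m t] C_Suc[of "Suc m" t] False p_def sub by auto
    next
      case pn: False
      have e1: "C m (Suc t) = insert p (C m t - {V (Suc t) (C m t)})"
        using C_Suc[of m t] False pn p_def by simp
      show ?thesis
      proof (cases "p \<in> C (Suc m) t")
        case True
        then show ?thesis using e1 C_Suc[of "Suc m" t] p_def sub by auto
      next
        case pn2: False
        have e2: "C (Suc m) (Suc t) = insert p (C (Suc m) t - {V (Suc t) (C (Suc m) t)})"
          using C_Suc[of "Suc m" t] pn2 p_def by simp
        have "V (Suc t) (C (Suc m) t) \<in> C m t \<Longrightarrow>
              V (Suc t) (C (Suc m) t) = V (Suc t) (C m t)"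
          using vsub[OF I, of m "Suc m"] False m by simp
        then show ?thesis using e1 e2 sub by auto
      qed
    qed
  qed simp
  show ?thesis using A B unfolding inv_def by blast
qed

lemma inv_all: "enat t \<le> N \<Longrightarrow> inv t"
proof (induction t)
  case 0 show ?case by (rule inv0)
next
  case (Suc t)
  have "enat t \<le> enat (Suc t)" by simp
  then have "enat t \<le> N" using Suc.prems by (rule order.trans)
  then show ?case using Suc inv_step by blast
qed


definition inpos :: "nat \<Rightarrow> 'a \<Rightarrow> nat \<Rightarrow> bool" where
  "inpos t q m \<longleftrightarrow> 1 \<le> m \<and> m \<le> n \<and> q \<in> C m t \<and> q \<notin> C (m - 1) t"

lemma inpos_ex:
  assumes I: "inv t" and q: "q \<in> U"
  shows "\<exists>m. inpos t q m"
proof -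
  have ex: "\<exists>m. q \<in> C m t" using inv_n[OF I] q by blast
  define m where "m = (LEAST m. q \<in> C m t)"
  have qm: "q \<in> C m t" using LeastI_ex[OF ex] m_def by simp
  have mn: "m \<le> n" using Least_le[of "\<lambda>m. q \<in> C m t" n] inv_n[OF I] q m_def by simp
  have m0: "m \<noteq> 0" using qm by (cases "m = 0") auto
  have "q \<notin> C (m - 1) t"
  proof
    assume "q \<in> C (m - 1) t"
    then have "m \<le> m - 1" using Least_le[of "\<lambda>m. q \<in> C m t" "m - 1"] m_def by simp
    then show False using m0 by simp
  qed
  then show ?thesis using qm mn m0 unfolding inpos_def by (intro exI[of _ m]) simp
qed

lemma inpos_upos:
  assumes I: "inv t" and a: "inpos t q m" and b: "inpos t q m'"
  shows "m = m'"
proof (rule ccontr)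
  assume "m \<noteq> m'"
  then consider "m < m'" | "m' < m" by linarith
  then show False
  proof cases
    case 1
    moreover have "m' \<le> n" using b unfolding inpos_def by blast
    then have "m' - 1 \<le> n" by simp
    ultimately have "C m t \<subseteq> C (m' - 1) t" using inv_mono[OF I, of m "m' - 1"] by simp
    then show False using a b unfolding inpos_def by blast
  next
    case 2
    moreover have "m \<le> n" using a unfolding inpos_def by blast
    then have "m - 1 \<le> n" by simp
    ultimately have "C m' t \<subseteq> C (m - 1) t" using inv_mono[OF I, of m' "m - 1"] by simp
    then show False using a b unfolding inpos_def by blast
  qed
qed

lemma inpos_belady: "inv t \<Longrightarrow> inpos t q m \<Longrightarrow> belady_pos U \<sigma> N rk C0 t q = m"
  unfolding belady_pos_def
  apply (rule the_equality)
   apply (simp add: inpos_def)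
  using inpos_upos by (metis inpos_def)

lemma inpos_of_belady: "inv t \<Longrightarrow> q \<in> U \<Longrightarrow> inpos t q (belady_pos U \<sigma> N rk C0 t q)"
  using inpos_ex inpos_belady by metis

lemma diff_card:
  assumes I: "inv t" and m: "1 \<le> m" "m \<le> n"
  shows "card (C m t - C (m - 1) t) = 1"
proof -
  have "C (m - 1) t \<subseteq> C m t" using inv_mono[OF I, of "m - 1" m] m by simp
  moreover have "finite (C m t)" using inv_fin[OF I m(2)] .
  ultimately have "card (C m t - C (m - 1) t) = card (C m t) - card (C (m - 1) t)"
    by (meson card_Diff_subset finite_subset)
  then show ?thesis using inv_card[OF I, of m] inv_card[OF I, of "m - 1"] m by simp
qed

lemma inpos_upage:
  assumes I: "inv t" and a: "inpos t x m" and b: "inpos t y m"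
  shows "x = y"
proof -
  have "card (C m t - C (m - 1) t) = 1" using diff_card[OF I] a unfolding inpos_def by simp
  then obtain z where z: "C m t - C (m - 1) t = {z}" by (rule card_1_singletonE)
  have hx: "x \<in> C m t - C (m - 1) t" and hy: "y \<in> C m t - C (m - 1) t"
    using a b unfolding inpos_def by auto
  have "x = z" using hx unfolding z by simp
  moreover have "y = z" using hy unfolding z by simp
  ultimately show ?thesis by simp
qed

lemma page_ex:
  assumes I: "inv t" and m: "1 \<le> m" "m \<le> n"
  shows "\<exists>x. inpos t x m"
proof -
  have "card (C m t - C (m - 1) t) = 1" using diff_card[OF I m] .
  then obtain z where "C m t - C (m - 1) t = {z}" by (rule card_1_singletonE)
  then show ?thesis using m unfolding inpos_def by blast
qed

lemma inpos_U: "inv t \<Longrightarrow> inpos t x m \<Longrightarrow> x \<in> U"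
  using inv_sub unfolding inpos_def by blast


context
  fixes t j
  assumes I: "inv t" and tN: "enat (Suc t) \<le> N" and pj: "inpos t (\<sigma> (Suc t)) j"
begin

lemma T_a: "j \<le> m \<Longrightarrow> m \<le> n \<Longrightarrow> C m (Suc t) = C m t"
proof -
  assume m: "j \<le> m" "m \<le> n"
  have "\<sigma> (Suc t) \<in> C j t" using pj unfolding inpos_def by blast
  then have "\<sigma> (Suc t) \<in> C m t" using inv_mono[OF I m] by blast
  moreover have "0 < m" using pj m unfolding inpos_def by simp
  ultimately show ?thesis using C_Suc[of m t] by simp
qed

lemma T_b: "1 \<le> m \<Longrightarrow> m < j \<Longrightarrow> \<sigma> (Suc t) \<notin> C m t \<and>
   C m (Suc t) = insert (\<sigma> (Suc t)) (C m t - {V (Suc t) (C m t)})"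
proof -
  assume m: "1 \<le> m" "m < j"
  have "j \<le> n" using pj unfolding inpos_def by simp
  then have "C m t \<subseteq> C (j - 1) t" using inv_mono[OF I, of m "j - 1"] m by simp
  then have "\<sigma> (Suc t) \<notin> C m t" using pj unfolding inpos_def by blast
  then show ?thesis using C_Suc[of m t] m by simp
qed

lemma T_p: "1 \<le> m \<Longrightarrow> m \<le> n \<Longrightarrow> \<sigma> (Suc t) \<in> C m (Suc t)"
proof -
  assume m: "1 \<le> m" "m \<le> n"
  show ?thesis
  proof (cases "j \<le> m")
    case True
    then show ?thesis using T_a[OF True m(2)] inv_mono[OF I True m(2)] pj unfolding inpos_def by blast
  next
    case False
    then show ?thesis using T_b[OF m(1)] by simp
  qed
qed

lemma T_same: "inpos t x m \<Longrightarrow> j < m \<Longrightarrow> inpos (Suc t) x m"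
proof -
  assume a: "inpos t x m" "j < m"
  have "m \<le> n" using a unfolding inpos_def by simp
  then have "C m (Suc t) = C m t" "C (m - 1) (Suc t) = C (m - 1) t"
    using T_a a(2) by auto
  then show ?thesis using a(1) unfolding inpos_def by simp
qed

lemma T_G:
  assumes m: "2 \<le> m" "m < j" and x: "inpos t x m" and x': "inpos (Suc t) x' m"
  shows "x' \<in> C m t \<and> (x' = x \<or> (x' = V (Suc t) (C (m - 1) t) \<and> V (Suc t) (C m t) = x))"
proof -
  let ?p = "\<sigma> (Suc t)"
  have jn: "j \<le> n" using pj unfolding inpos_def by simp
  have e1: "C m (Suc t) = insert ?p (C m t - {V (Suc t) (C m t)})" using T_b[of m] m by simp
  have e0: "C (m - 1) (Suc t) = insert ?p (C (m - 1) t - {V (Suc t) (C (m - 1) t)})"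
    using T_b[of "m - 1"] m by simp
  have "?p \<in> C (m - 1) (Suc t)" using e0 by simp
  then have x'p: "x' \<noteq> ?p" using x' unfolding inpos_def by blast
  have x'C: "x' \<in> C m t" "x' \<noteq> V (Suc t) (C m t)" using x' x'p e1 unfolding inpos_def by auto
  have x'n0: "x' \<notin> C (m - 1) (Suc t)" using x' unfolding inpos_def by blast
  show ?thesis
  proof (cases "x' \<in> C (m - 1) t")
    case False
    then have "inpos t x' m" using x'C x unfolding inpos_def by simp
    then have "x' = x" using inpos_upage[OF I _ x] by simp
    then show ?thesis using x'C by simp
  next
    case True
    then have xv: "x' = V (Suc t) (C (m - 1) t)" using x'n0 e0 by auto
    have vm: "V (Suc t) (C m t) \<in> C m t" using vmax[OF I, of m] m jn by simp
    have "V (Suc t) (C m t) \<notin> C (m - 1) t"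
    proof
      assume "V (Suc t) (C m t) \<in> C (m - 1) t"
      then have "V (Suc t) (C m t) = V (Suc t) (C (m - 1) t)"
        using vsub[OF I, of "m - 1" m] m jn by simp
      then show False using xv x'C by simp
    qed
    then have "inpos t (V (Suc t) (C m t)) m" using vm x m jn unfolding inpos_def by simp
    then have "V (Suc t) (C m t) = x" using inpos_upage[OF I _ x] by simp
    then show ?thesis using xv x'C by simp
  qed
qed

lemma T_Gk:
  assumes m: "2 \<le> m" "m < j" and x: "inpos t x m" and x': "inpos (Suc t) x' m"
  shows "K (Suc t) x' x"
proof -
  have jn: "j \<le> n" using pj unfolding inpos_def by simp
  have vm: "\<forall>q\<in>C m t. K (Suc t) q (V (Suc t) (C m t))" using vmax[OF I, of m] m jn by simp
  show ?thesis using T_G[OF m x x'] vm kle_refl by metis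
qed

end


lemma enat_mono_le: "s \<le> t2 \<Longrightarrow> enat t2 \<le> N \<Longrightarrow> enat s \<le> N"
  using order.trans[of "enat s" "enat t2" N] by simp

lemma K_Suc: "\<sigma> (Suc s) \<noteq> x \<Longrightarrow> \<sigma> (Suc s) \<noteq> y \<Longrightarrow> K s x y \<Longrightarrow> K (Suc s) x y"
  unfolding kle_def using nr_Suc[of \<sigma> s x N] nr_Suc[of \<sigma> s y N] by simp

lemma pos_inpos:
  assumes "enat (Suc s) \<le> N"
  shows "inpos s (\<sigma> (Suc s)) (position_seq U rk C0 \<sigma> N (Suc s))"
proof -
  have "inv s" using assms enat_mono_le[of s "Suc s"] inv_all by simp
  moreover have "\<sigma> (Suc s) \<in> U" using req_U assms by simp
  ultimately show ?thesis unfolding position_seq_def using inpos_of_belady by simp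
qed

lemma core:
  assumes t1: "1 \<le> t1" "t1 < t2" "enat t2 \<le> N"
    and h1: "position_seq U rk C0 \<sigma> N t1 = H" and h2: "position_seq U rk C0 \<sigma> N t2 = H"
    and k: "2 \<le> k" "k < H"
    and mid: "\<forall>s. t1 < s \<and> s < t2 \<longrightarrow> position_seq U rk C0 \<sigma> N s \<noteq> k \<and> position_seq U rk C0 \<sigma> N s \<noteq> H"
  shows False
proof -
  define J where "J s \<longleftrightarrow> (\<exists>x y. inpos s x k \<and> inpos s y H \<and> K s x y)" for s
  obtain t0 where t0: "t1 = Suc t0" using t1(1) by (cases t1) auto
  have t1N: "enat t1 \<le> N" using enat_mono_le[of t1 t2] t1 by simp
  have I0: "inv t0" using enat_mono_le[of t0 t2] t1 t0 inv_all by simp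
  have I1: "inv t1" using t1N inv_all by simp
  let ?p = "\<sigma> t1"
  have pH: "inpos t0 ?p H" using pos_inpos[of t0] t1N h1 t0 by simp
  have Hn: "H \<le> n" using pH unfolding inpos_def by simp
  have J1: "J t1"
  proof -
    define y where "y = V t1 (C (H - 1) t0)"
    have eH: "C H t1 = C H t0" using T_a[OF I0 _ _, of H H] pH t1N t0 Hn by simp
    have eH1: "?p \<notin> C (H - 1) t0 \<and> C (H - 1) t1 = insert ?p (C (H - 1) t0 - {y})"
      using T_b[OF I0 _ _, of H "H - 1"] pH t1N t0 k y_def by simp
    have yv: "y \<in> C (H - 1) t0 \<and> (\<forall>q\<in>C (H - 1) t0. K t1 q y)"
      using vmax[OF I0, of "H - 1" t1] k Hn y_def by simp
    have "C (H - 1) t0 \<subseteq> C H t0" using inv_mono[OF I0, of "H - 1" H] Hn by simp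
    then have yH: "inpos t1 y H" using yv eH eH1 Hn k unfolding inpos_def by auto
    obtain x where x: "inpos t1 x k" using page_ex[OF I1, of k] k Hn by auto
    have "?p \<in> C (k - 1) t1" using T_p[OF I0 _ _, of H "k - 1"] pH t1N t0 k Hn by simp
    then have xp: "x \<noteq> ?p" using x unfolding inpos_def by auto
    have "C k t1 \<subseteq> C (H - 1) t1" using inv_mono[OF I1, of k "H - 1"] k Hn by simp
    then have "x \<in> C (H - 1) t0" using x xp eH1 unfolding inpos_def by auto
    then have "K t1 x y" using yv by blast
    then show ?thesis unfolding J_def using x yH by blast
  qed
  have step: "J (Suc s)" if s: "J s" "t1 \<le> s" "Suc s < t2" for s
  proof -
    obtain x y where xy: "inpos s x k" "inpos s y H" "K s x y" using s(1) unfolding J_def by blast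
    have sN: "enat (Suc s) \<le> N" using enat_mono_le[of "Suc s" t2] s t1 by simp
    have Is: "inv s" using enat_mono_le[of s t2] s t1 inv_all by simp
    have Is1: "inv (Suc s)" using sN inv_all by simp
    define j where "j = position_seq U rk C0 \<sigma> N (Suc s)"
    have pj: "inpos s (\<sigma> (Suc s)) j" using pos_inpos[OF sN] j_def by simp
    have jk: "j \<noteq> k" "j \<noteq> H" using mid s j_def by auto
    have xp: "\<sigma> (Suc s) \<noteq> x" using inpos_upos[OF Is pj] xy jk by metis
    have yp: "\<sigma> (Suc s) \<noteq> y" using inpos_upos[OF Is pj] xy jk by metis
    have Kxy: "K (Suc s) x y" using K_Suc[OF xp yp xy(3)] .
    consider "j < k" | "k < j" "j < H" | "H < j" using jk k by linarith
    then show ?thesis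
    proof cases
      case 1
      then have "inpos (Suc s) x k" "inpos (Suc s) y H"
        using T_same[OF Is sN pj] xy k by auto
      then show ?thesis unfolding J_def using Kxy by blast
    next
      case 2
      obtain x' where x': "inpos (Suc s) x' k" using page_ex[OF Is1, of k] k Hn by auto
      have "K (Suc s) x' x" using T_Gk[OF Is sN pj k(1) 2(1) xy(1) x'] .
      then have "K (Suc s) x' y" using Kxy kle_trans by metis
      moreover have "inpos (Suc s) y H" using T_same[OF Is sN pj] xy 2 by auto
      ultimately show ?thesis unfolding J_def using x' by blast
    next
      case 3
      obtain x' where x': "inpos (Suc s) x' k" using page_ex[OF Is1, of k] k Hn by auto
      obtain y' where y': "inpos (Suc s) y' H" using page_ex[OF Is1, of H] k Hn by auto
      have Kx': "K (Suc s) x' x" using T_Gk[OF Is sN pj k(1) _ xy(1) x'] 3 k by simp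
      have Gx: "x' \<in> C k s" using T_G[OF Is sN pj k(1) _ xy(1) x'] 3 k by simp
      have Gy: "y' = y \<or> y' = V (Suc s) (C (H - 1) s)"
        using T_G[OF Is sN pj _ _ xy(2) y'] 3 k by auto
      have "K (Suc s) x' y'"
      proof (cases "y' = y")
        case True
        then show ?thesis using Kx' Kxy kle_trans by metis
      next
        case False
        then have yv: "y' = V (Suc s) (C (H - 1) s)" using Gy by simp
        have "C k s \<subseteq> C (H - 1) s" using inv_mono[OF Is, of k "H - 1"] k Hn by simp
        then have "x' \<in> C (H - 1) s" using Gx by blast
        then show ?thesis using vmax[OF Is, of "H - 1" "Suc s"] yv k Hn by simp
      qed
      then show ?thesis unfolding J_def using x' y' by blast
    qed
  qed
  have Jall: "\<forall>d. t1 + d < t2 \<longrightarrow> J (t1 + d)"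
  proof
    fix d show "t1 + d < t2 \<longrightarrow> J (t1 + d)"
    proof (induction d)
      case 0 then show ?case using J1 by simp
    next
      case (Suc d)
      then show ?case using step[of "t1 + d"] by simp
    qed
  qed
  obtain t3 where t3: "t2 = Suc t3" using t1 by (cases t2) auto
  have "J t3" using Jall[rule_format, of "t3 - t1"] t1 t3 by simp
  then obtain x y where xy: "inpos t3 x k" "inpos t3 y H" "K t3 x y" unfolding J_def by blast
  have I3: "inv t3" using enat_mono_le[of t3 t2] t1 t3 inv_all by simp
  have "inpos t3 (\<sigma> t2) H" using pos_inpos[of t3] t1 t3 h2 by simp
  then have yq: "y = \<sigma> t2" using inpos_upage[OF I3] xy by metis
  have ny: "next_req \<sigma> N t3 y = enat t2" using nr_req[of t3 N \<sigma>] t1 t3 yq by simp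
  show False
  proof (cases "next_req \<sigma> N t3 x")
    case (enat s')
    then have s': "t3 < s' \<and> \<sigma> s' = x" using nr_enat_D by metis
    have "enat s' < enat t2 \<or> s' = t2" using xy(3) enat ny unfolding kle_def by auto
    then have "s' = t2" using s' t3 by auto
    then have "x = y" using s' yq by simp
    then have "k = H" using inpos_upos[OF I3] xy by metis
    then show False using k by simp
  next
    case infinity
    then show False using xy(3) ny unfolding kle_def by simp
  qed
qed

theorem part1: "repeat_property (position_seq U rk C0 \<sigma> N) N"
  unfolding repeat_property_def
proof (intro allI impI subsetI)
  fix t1 t2 k
  assume a: "1 \<le> t1 \<and> t1 < t2 \<and> enat t2 \<le> N \<and> position_seq U rk C0 \<sigma> N t1 = position_seq U rk C0 \<sigma> N t2"
    and k: "k \<in> {2..<position_seq U rk C0 \<sigma> N t1}"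
  let ?h = "position_seq U rk C0 \<sigma> N"
  show "k \<in> {?h s |s. t1 < s \<and> s < t2}"
  proof (rule ccontr)
    assume nk: "k \<notin> {?h s |s. t1 < s \<and> s < t2}"
    define t2' where "t2' = (LEAST s. t1 < s \<and> ?h s = ?h t1)"
    have ex: "t1 < t2 \<and> ?h t2 = ?h t1" using a by simp
    have t2'a: "t1 < t2' \<and> ?h t2' = ?h t1" using LeastI[of "\<lambda>s. t1 < s \<and> ?h s = ?h t1" t2, OF ex] t2'_def by simp
    have t2'b: "t2' \<le> t2" using Least_le[of "\<lambda>s. t1 < s \<and> ?h s = ?h t1" t2, OF ex] t2'_def by simp
    have mid: "\<forall>s. t1 < s \<and> s < t2' \<longrightarrow> ?h s \<noteq> k \<and> ?h s \<noteq> ?h t1"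
    proof (intro allI impI)
      fix s assume s: "t1 < s \<and> s < t2'"
      have "?h s \<noteq> k" using nk s t2'b by auto
      moreover have "?h s \<noteq> ?h t1"
        using not_less_Least[of s "\<lambda>s. t1 < s \<and> ?h s = ?h t1"] s t2'_def by auto
      ultimately show "?h s \<noteq> k \<and> ?h s \<noteq> ?h t1" by simp
    qed
    show False
      using core[of t1 t2' "?h t1" k] a t2'a t2'b mid k enat_mono_le[of t2' t2] by auto
  qed
qed

end




definition sw :: "nat \<Rightarrow> nat \<Rightarrow> nat" where
  "sw j i = (if i = 1 then j else if i = j then 1 else i)"

fun perm :: "(nat \<Rightarrow> nat) \<Rightarrow> nat \<Rightarrow> nat \<Rightarrow> nat" where
  "perm h 0 = (\<lambda>i. i - 1)"
| "perm h (Suc t) = perm h t \<circ> sw (h (Suc t))"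

definition sg :: "(nat \<Rightarrow> nat) \<Rightarrow> nat \<Rightarrow> nat" where
  "sg h t = perm h (t - 1) (h t)"

definition lastr :: "(nat \<Rightarrow> nat) \<Rightarrow> nat \<Rightarrow> nat \<Rightarrow> nat" where
  "lastr h T q = Max {s \<in> {1..T}. sg h s = q}"

definition rkc :: "(nat \<Rightarrow> nat) \<Rightarrow> nat \<Rightarrow> nat \<Rightarrow> nat" where
  "rkc h T q = (if \<exists>s\<in>{1..T}. sg h s = q then T - lastr h T q else T + 1 + q)"

lemma sw_sw: "sw j (sw j i) = i" by (simp add: sw_def)

lemma sw_bij: "j \<in> {1..n} \<Longrightarrow> bij_betw (sw j) {1..n} {1..n}"
  by (rule bij_betw_byWitness[where f' = "sw j"]) (auto simp: sw_def)

lemma perm0_img: "(\<lambda>i::nat. i - 1) ` {1..m} = {0..<m}"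
proof
  show "(\<lambda>i::nat. i - 1) ` {1..m} \<subseteq> {0..<m}" by auto
  show "{0..<m} \<subseteq> (\<lambda>i::nat. i - 1) ` {1..m}"
  proof
    fix x assume "x \<in> {0..<m}"
    then have "Suc x \<in> {1..m}" "x = Suc x - 1" by auto
    then show "x \<in> (\<lambda>i::nat. i - 1) ` {1..m}" by blast
  qed
qed


locale pg2 =
  fixes T :: nat and h :: "nat \<Rightarrow> nat"
  assumes hpos: "\<forall>t. 1 \<le> t \<and> t \<le> T \<longrightarrow> 1 \<le> h t" and rp: "repeat_property h (enat T)"
begin

definition "n2 = Max (insert 0 (h ` {1..T}))"
abbreviation "\<pi> \<equiv> perm h"
abbreviation "\<sigma> \<equiv> sg h"
abbreviation "rk \<equiv> rkc h T"

lemma hle: "1 \<le> t \<Longrightarrow> t \<le> T \<Longrightarrow> 1 \<le> h t \<and> h t \<le> n2"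
  using hpos unfolding n2_def by (auto intro: Max_ge)

lemma perm_bij: "t \<le> T \<Longrightarrow> bij_betw (\<pi> t) {1..n2} {0..<n2}"
proof (induction t)
  case 0
  have "inj_on (\<lambda>i::nat. i - 1) {1..n2}" by (auto simp: inj_on_def)
  then show ?case using perm0_img[of n2] by (simp add: bij_betw_def)
next
  case (Suc t)
  have "bij_betw (sw (h (Suc t))) {1..n2} {1..n2}" using sw_bij hle[of "Suc t"] Suc.prems by simp
  moreover have "bij_betw (\<pi> t) {1..n2} {0..<n2}" using Suc by simp
  ultimately have "bij_betw (\<pi> t \<circ> sw (h (Suc t))) {1..n2} {0..<n2}" by (rule bij_betw_trans)
  then show ?case by (simp add: comp_def)
qed

lemma perm_inj: "t \<le> T \<Longrightarrow> a \<in> {1..n2} \<Longrightarrow> b \<in> {1..n2} \<Longrightarrow> \<pi> t a = \<pi> t b \<Longrightarrow> a = b"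
  using perm_bij[of t] unfolding bij_betw_def inj_on_def by blast

lemma perm_neq: "t \<le> T \<Longrightarrow> a \<in> {1..n2} \<Longrightarrow> b \<in> {1..n2} \<Longrightarrow> a \<noteq> b \<Longrightarrow> \<pi> t a \<noteq> \<pi> t b"
  using perm_inj by blast

lemma perm_rng: "t \<le> T \<Longrightarrow> a \<in> {1..n2} \<Longrightarrow> \<pi> t a \<in> {0..<n2}"
  using perm_bij[of t] unfolding bij_betw_def by blast

lemma P1: "\<pi> (Suc t) 1 = \<sigma> (Suc t)" by (simp add: sg_def sw_def)

lemma P3: "\<pi> (Suc t) (h (Suc t)) = \<pi> t 1" by (simp add: sw_def)

lemma stay: "2 \<le> i \<Longrightarrow> t0 \<le> t' \<Longrightarrow> (\<forall>s. t0 < s \<and> s \<le> t' \<longrightarrow> h s \<noteq> i) \<Longrightarrow> \<pi> t' i = \<pi> t0 i"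
proof (induction t')
  case 0 then show ?case by simp
next
  case (Suc t')
  show ?case
  proof (cases "t0 = Suc t'")
    case False
    then have "\<pi> t' i = \<pi> t0 i" using Suc by auto
    moreover have "h (Suc t') \<noteq> i" using Suc.prems False by auto
    ultimately show ?thesis using Suc.prems by (simp add: sw_def)
  qed simp
qed

lemma req_stay:
  assumes i: "2 \<le> i" "i \<le> n2" and mid: "\<forall>s. t0 < s \<and> s < s1 \<longrightarrow> h s \<noteq> i"
  shows "\<forall>s. t0 < s \<and> s < s1 \<and> s \<le> T \<longrightarrow> \<sigma> s \<noteq> \<pi> t0 i"
    and "t0 < s1 \<Longrightarrow> s1 \<le> T \<Longrightarrow> h s1 = i \<Longrightarrow> \<sigma> s1 = \<pi> t0 i"
proof -
  show "\<forall>s. t0 < s \<and> s < s1 \<and> s \<le> T \<longrightarrow> \<sigma> s \<noteq> \<pi> t0 i"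
  proof (intro allI impI)
    fix s assume s: "t0 < s \<and> s < s1 \<and> s \<le> T"
    have "t0 \<le> s - 1" "\<forall>sa. t0 < sa \<and> sa \<le> s - 1 \<longrightarrow> h sa \<noteq> i" using mid s by auto
    then have st: "\<pi> (s - 1) i = \<pi> t0 i" using stay[of i t0 "s - 1"] i by simp
    have "h s \<noteq> i" using mid s by auto
    moreover have "s - 1 \<le> T" "h s \<in> {1..n2}" "i \<in> {1..n2}" using hle[of s] s i by auto
    ultimately have "\<pi> (s - 1) (h s) \<noteq> \<pi> (s - 1) i"
      using perm_inj[of "s - 1" "h s" i] by blast
    then show "\<sigma> s \<noteq> \<pi> t0 i" using st by (simp add: sg_def)
  qed
  assume s1: "t0 < s1" "s1 \<le> T" "h s1 = i"
  have "t0 \<le> s1 - 1" "\<forall>sa. t0 < sa \<and> sa \<le> s1 - 1 \<longrightarrow> h sa \<noteq> i" using mid s1 by auto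
  then have "\<pi> (s1 - 1) i = \<pi> t0 i" using stay[of i t0 "s1 - 1"] i by simp
  then show "\<sigma> s1 = \<pi> t0 i" using s1 by (simp add: sg_def)
qed


lemma lastr_in: "(\<exists>s\<in>{1..T}. \<sigma> s = q) \<Longrightarrow> lastr h T q \<in> {1..T} \<and> \<sigma> (lastr h T q) = q"
proof -
  assume e: "\<exists>s\<in>{1..T}. \<sigma> s = q"
  have "finite {s \<in> {1..T}. \<sigma> s = q}" by simp
  moreover have "{s \<in> {1..T}. \<sigma> s = q} \<noteq> {}" using e by blast
  ultimately have "Max {s \<in> {1..T}. \<sigma> s = q} \<in> {s \<in> {1..T}. \<sigma> s = q}" by (rule Max_in)
  then show ?thesis unfolding lastr_def by simp
qed

lemma lastr_ge: "s \<in> {1..T} \<Longrightarrow> \<sigma> s = q \<Longrightarrow> s \<le> lastr h T q"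
  unfolding lastr_def by (rule Max_ge) auto

lemma rk_inj: "rk a = rk b \<Longrightarrow> a = b"
proof -
  assume e: "rk a = rk b"
  consider "\<exists>s\<in>{1..T}. \<sigma> s = a" "\<exists>s\<in>{1..T}. \<sigma> s = b"
    | "\<exists>s\<in>{1..T}. \<sigma> s = a" "\<not>(\<exists>s\<in>{1..T}. \<sigma> s = b)"
    | "\<not>(\<exists>s\<in>{1..T}. \<sigma> s = a)" "\<exists>s\<in>{1..T}. \<sigma> s = b"
    | "\<not>(\<exists>s\<in>{1..T}. \<sigma> s = a)" "\<not>(\<exists>s\<in>{1..T}. \<sigma> s = b)" by blast
  then show "a = b"
  proof cases
    case 1
    have A: "lastr h T a \<in> {1..T} \<and> \<sigma> (lastr h T a) = a" using lastr_in 1 by blast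
    have B: "lastr h T b \<in> {1..T} \<and> \<sigma> (lastr h T b) = b" using lastr_in 1 by blast
    have "T - lastr h T a = T - lastr h T b" using e 1 unfolding rkc_def by simp
    moreover have "lastr h T a \<le> T" "lastr h T b \<le> T" using A B by auto
    ultimately have "lastr h T a = lastr h T b" by (metis diff_diff_cancel)
    then show ?thesis using A B by metis
  next
    case 2 then show ?thesis using e unfolding rkc_def by simp
  next
    case 3 then show ?thesis using e unfolding rkc_def by simp
  next
    case 4 then show ?thesis using e unfolding rkc_def by simp
  qed
qed

lemma KL:
  assumes tT: "Suc t \<le> T" and j3: "3 \<le> h (Suc t)" and i: "2 \<le> i" "i < h (Suc t)"
  shows "kle \<sigma> (enat T) rk (Suc t) (\<pi> t i) (\<pi> t 1)"
proof -
  let ?t' = "Suc t"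
  define j where "j = h ?t'"
  define a where "a = \<pi> t 1"
  define b where "b = \<pi> t i"
  have jn: "j \<le> n2" using hle[of ?t'] tT j_def by simp
  have in_: "i \<le> n2" using jn i j_def by simp
  have a': "\<pi> ?t' j = a" using P3 j_def a_def by simp
  have b': "\<pi> ?t' i = b" using i j_def b_def by (simp add: sw_def)
  have sa: "\<sigma> ?t' \<noteq> a" "\<sigma> ?t' \<noteq> b"
  proof -
    have "\<sigma> ?t' = \<pi> t j" by (simp add: sg_def j_def)
    moreover have "t \<le> T" "j \<in> {1..n2}" "1 \<in> {1..n2}" "i \<in> {1..n2}" "j \<noteq> 1" "j \<noteq> i"
      using tT jn in_ i j3 j_def by auto
    ultimately have "\<pi> t j \<noteq> \<pi> t 1" "\<pi> t j \<noteq> \<pi> t i" using perm_neq by blast+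
    then show "\<sigma> ?t' \<noteq> a" "\<sigma> ?t' \<noteq> b" using a_def b_def \<open>\<sigma> ?t' = \<pi> t j\<close> by auto
  qed
  show ?thesis
  proof (cases "\<exists>s. ?t' < s \<and> s \<le> T \<and> h s = j")
    case True
    define s2 where "s2 = (LEAST s. ?t' < s \<and> s \<le> T \<and> h s = j)"
    have s2: "?t' < s2 \<and> s2 \<le> T \<and> h s2 = j" using LeastI_ex[OF True] s2_def by simp
    have s2m: "\<forall>s. ?t' < s \<and> s < s2 \<longrightarrow> h s \<noteq> j"
    proof (intro allI impI)
      fix s assume s: "?t' < s \<and> s < s2"
      show "h s \<noteq> j"
      proof
        assume "h s = j"
        then have "?t' < s \<and> s \<le> T \<and> h s = j" using s s2 by simp
        then have "s2 \<le> s" unfolding s2_def by (rule Least_le)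
        then show False using s by simp
      qed
    qed
    have j2: "2 \<le> j" using j3 j_def by simp
    have na0: "\<forall>s. ?t' < s \<and> s < s2 \<and> s \<le> T \<longrightarrow> \<sigma> s \<noteq> \<pi> ?t' j"
      using req_stay(1)[OF j2 jn s2m] .
    then have na: "\<forall>s. ?t' < s \<and> s < s2 \<and> s \<le> T \<longrightarrow> \<sigma> s \<noteq> a" using a' by simp
    have nra: "enat s2 \<le> next_req \<sigma> (enat T) ?t' a"
    proof (rule nr_ge)
      fix s assume "?t' < s" "s < s2"
      then show "\<sigma> s \<noteq> a" using na s2 by simp
    qed
    have rpi: "1 \<le> ?t' \<and> ?t' < s2 \<and> enat s2 \<le> enat T \<and> h ?t' = h s2" using s2 j_def by simp
    have "{2..<h ?t'} \<subseteq> {h s |s. ?t' < s \<and> s < s2}"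
      using rp rpi unfolding repeat_property_def by blast
    moreover have "i \<in> {2..<h ?t'}" using i by simp
    ultimately have "i \<in> {h s |s. ?t' < s \<and> s < s2}" by blast
    then obtain s' where s': "?t' < s'" "s' < s2" "h s' = i" by blast
    define s1 where "s1 = (LEAST s. ?t' < s \<and> h s = i)"
    have ex1: "?t' < s' \<and> h s' = i" using s' by simp
    have s1: "?t' < s1 \<and> h s1 = i" unfolding s1_def by (rule LeastI[of "\<lambda>s. ?t' < s \<and> h s = i", OF ex1])
    have s1le: "s1 \<le> s'" unfolding s1_def by (rule Least_le[of "\<lambda>s. ?t' < s \<and> h s = i", OF ex1])
    have s1m: "\<forall>s. ?t' < s \<and> s < s1 \<longrightarrow> h s \<noteq> i"
    proof (intro allI impI)
      fix s assume s: "?t' < s \<and> s < s1"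
      show "h s \<noteq> i"
      proof
        assume "h s = i"
        then have "?t' < s \<and> h s = i" using s by simp
        then have "s1 \<le> s" unfolding s1_def by (rule Least_le)
        then show False using s by simp
      qed
    qed
    have s1T: "s1 \<le> T" using s1le s' s2 by simp
    have "\<sigma> s1 = \<pi> ?t' i" using req_stay(2)[OF i(1) in_ s1m] s1 s1T by simp
    then have sb: "\<sigma> s1 = b" using b' by simp
    have "next_req \<sigma> (enat T) ?t' b \<le> enat s1"
      by (rule nr_le) (use s1 s1T sb in auto)
    moreover have "enat s1 < enat s2" using s1le s' by simp
    ultimately have "next_req \<sigma> (enat T) ?t' b < next_req \<sigma> (enat T) ?t' a"
      using nra by (meson order_le_less_trans order_less_le_trans)
    then show ?thesis unfolding kle_def a_def b_def by simp
  next
    case False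
    have na: "\<forall>s. ?t' < s \<and> s < Suc T \<and> s \<le> T \<longrightarrow> \<sigma> s \<noteq> a"
      using req_stay(1)[of j ?t' "Suc T"] False jn j3 j_def a' by auto
    have nra: "next_req \<sigma> (enat T) ?t' a = \<infinity>" using na unfolding nr_inf by auto
    show ?thesis
    proof (cases "next_req \<sigma> (enat T) ?t' b = \<infinity>")
      case False
      then show ?thesis using nra unfolding kle_def a_def b_def by simp
    next
      case True
      have nb: "\<forall>s. ?t' < s \<and> s \<le> T \<longrightarrow> \<sigma> s \<noteq> b" using True unfolding nr_inf by auto
      have "rk a \<le> rk b"
      proof (cases t)
        case 0
        have a0: "a = 0" using a_def 0 by simp
        have b0: "b = i - 1" using b_def 0 by simp
        have "\<not>(\<exists>s\<in>{1..T}. \<sigma> s = a)"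
        proof
          assume "\<exists>s\<in>{1..T}. \<sigma> s = a"
          then obtain s where s: "s \<in> {1..T}" "\<sigma> s = a" by blast
          show False
          proof (cases "s = Suc t")
            case True then show False using sa s by simp
          next
            case False
            then have "Suc t < s" using s 0 by auto
            then show False using na s by auto
          qed
        qed
        moreover have "\<not>(\<exists>s\<in>{1..T}. \<sigma> s = b)"
        proof
          assume "\<exists>s\<in>{1..T}. \<sigma> s = b"
          then obtain s where s: "s \<in> {1..T}" "\<sigma> s = b" by blast
          show False
          proof (cases "s = Suc t")
            case True then show False using sa s by simp
          next
            case False
            then have "Suc t < s" using s 0 by auto
            then show False using nb s by auto
          qed
        qed
        ultimately have "rk a = T + 1 + a" "rk b = T + 1 + b" unfolding rkc_def by simp_all
        then show ?thesis using a0 by simp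
      next
        case (Suc t0)
        have sta: "\<sigma> t = a" using P1[of t0] Suc a_def by simp
        have t1T: "t \<in> {1..T}" using Suc tT by simp
        have ra: "\<forall>s\<in>{1..T}. \<sigma> s = a \<longrightarrow> s \<le> t"
        proof (intro ballI impI)
          fix s assume s: "s \<in> {1..T}" "\<sigma> s = a"
          have ns: "s \<noteq> ?t'" using sa(1) s(2) by metis
          show "s \<le> t"
          proof (rule ccontr)
            assume "\<not> s \<le> t"
            then have "?t' < s" using ns by simp
            then show False using na s by auto
          qed
        qed
        have exa: "\<exists>s\<in>{1..T}. \<sigma> s = a" using sta t1T by blast
        have l1: "lastr h T a \<in> {1..T} \<and> \<sigma> (lastr h T a) = a" using lastr_in[OF exa] .
        have "lastr h T a \<le> t" using ra l1 by blast
        moreover have "t \<le> lastr h T a" using lastr_ge[OF t1T sta] .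
        ultimately have la: "lastr h T a = t" by simp
        have rka: "rk a = T - t" unfolding rkc_def using la exa by simp
        have "t \<le> T" "1 \<in> {1..n2}" "i \<in> {1..n2}" "1 \<noteq> i" using tT in_ i by auto
        then have ab: "a \<noteq> b" using perm_neq a_def b_def by blast
        have rb: "\<forall>s\<in>{1..T}. \<sigma> s = b \<longrightarrow> s < t"
        proof (intro ballI impI)
          fix s assume s: "s \<in> {1..T}" "\<sigma> s = b"
          have "s \<noteq> t" using s sta ab by auto
          moreover have "s \<noteq> ?t'" using s sa by auto
          moreover have "\<not> ?t' < s" using nb s by auto
          ultimately show "s < t" by simp
        qed
        show ?thesis
        proof (cases "\<exists>s\<in>{1..T}. \<sigma> s = b")
          case True
          then have "lastr h T b < t" using lastr_in[of b] rb by blast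
          moreover have "rk b = T - lastr h T b" unfolding rkc_def using True by simp
          ultimately show ?thesis using rka tT by simp
        next
          case False
          then have "rk b = T + 1 + b" unfolding rkc_def by simp
          then show ?thesis using rka by simp
        qed
      qed
      then show ?thesis unfolding kle_def using True nra a_def b_def by simp
    qed
  qed
qed


lemma perm_mem: "t \<le> T \<Longrightarrow> m \<le> n2 \<Longrightarrow> a \<in> {1..n2} \<Longrightarrow> (\<pi> t a \<in> \<pi> t ` {1..m}) = (a \<le> m)"
proof -
  assume a: "t \<le> T" "m \<le> n2" "a \<in> {1..n2}"
  have inj: "inj_on (\<pi> t) {1..n2}" using perm_bij[OF a(1)] unfolding bij_betw_def by blast
  have "(\<pi> t a \<in> \<pi> t ` {1..m}) = (a \<in> {1..m})"
    by (rule inj_on_image_mem_iff[OF inj]) (use a in auto)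
  then show ?thesis using a by auto
qed

lemma sw_img1: "j \<in> {1..m} \<Longrightarrow> sw j ` {1..m} = {1..m}"
  using sw_bij[of j m] bij_betw_imp_surj_on by blast

lemma sw_img2: "1 \<le> m \<Longrightarrow> m < j \<Longrightarrow> sw j ` {1..m} = insert j ({1..m} - {1})"
proof
  assume a: "1 \<le> m" "m < j"
  show "sw j ` {1..m} \<subseteq> insert j ({1..m} - {1})" using a by (auto simp: sw_def)
  show "insert j ({1..m} - {1}) \<subseteq> sw j ` {1..m}"
  proof
    fix x assume x: "x \<in> insert j ({1..m} - {1})"
    show "x \<in> sw j ` {1..m}"
    proof (cases "x = j")
      case True
      then have "x = sw j 1" by (simp add: sw_def)
      then show ?thesis using a by auto
    next
      case False
      then have "x \<in> {1..m}" "x \<noteq> 1" using x by auto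
      then have "x = sw j x" using a by (simp add: sw_def)
      then show ?thesis using \<open>x \<in> {1..m}\<close> by blast
    qed
  qed
qed

lemma cache_perm:
  "t \<le> T \<Longrightarrow> m \<le> n2 \<Longrightarrow> cache \<sigma> (enat T) rk (\<lambda>m. {0..<m}) m t = \<pi> t ` {1..m}"
proof (induction t arbitrary: m)
  case 0
  then show ?case using perm0_img[of m] by (simp add: cache_def)
next
  case (Suc t)
  show ?case
  proof (cases "m = 0")
    case True then show ?thesis by (simp add: cache_def)
  next
    case m0: False
    define j where "j = h (Suc t)"
    have jn: "1 \<le> j" "j \<le> n2" using hle[of "Suc t"] Suc.prems j_def by auto
    have tT: "t \<le> T" using Suc.prems by simp
    define CC where "CC = \<pi> t ` {1..m}"
    have IH: "fif \<sigma> (enat T) rk {0..<m} t = CC"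
      using Suc.IH[OF tT Suc.prems(2)] m0 CC_def by (simp add: cache_def)
    have p: "\<sigma> (Suc t) = \<pi> t j" by (simp add: sg_def j_def)
    have eq: "cache \<sigma> (enat T) rk (\<lambda>m. {0..<m}) m (Suc t) =
        (if \<pi> t j \<in> CC then CC else insert (\<pi> t j) (CC - {victim \<sigma> (enat T) rk (Suc t) CC}))"
      using m0 IH p by (simp add: cache_def Let_def)
    have ps: "\<pi> (Suc t) ` {1..m} = \<pi> t ` (sw j ` {1..m})" by (simp add: image_comp j_def)
    show ?thesis
    proof (cases "j \<le> m")
      case True
      then have "\<pi> t j \<in> CC" using perm_mem[OF tT Suc.prems(2)] jn CC_def by simp
      moreover have "\<pi> (Suc t) ` {1..m} = CC" using ps sw_img1[of j m] True jn CC_def by simp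
      ultimately show ?thesis using eq by simp
    next
      case False
      then have jm: "m < j" by simp
      have pn: "\<pi> t j \<notin> CC" using perm_mem[OF tT Suc.prems(2)] jn jm CC_def by simp
      have inj: "inj_on rk CC" by (rule inj_onI) (use rk_inj in blast)
      have m1: "1 \<le> m" using m0 by simp
      have v1: "\<pi> t 1 \<in> CC" using m1 CC_def by simp
      have allk: "\<forall>q\<in>CC. kle \<sigma> (enat T) rk (Suc t) q (\<pi> t 1)"
      proof
        fix q assume "q \<in> CC"
        then obtain i where i: "i \<in> {1..m}" "q = \<pi> t i" using CC_def by blast
        show "kle \<sigma> (enat T) rk (Suc t) q (\<pi> t 1)"
        proof (cases "i = 1")
          case True then show ?thesis using i kle_refl by simp
        next
          case False
          then have "2 \<le> i" "i < h (Suc t)" "3 \<le> h (Suc t)" using i jm j_def by auto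
          then show ?thesis using KL[OF Suc.prems(1)] i by simp
        qed
      qed
      have vic: "victim \<sigma> (enat T) rk (Suc t) CC = \<pi> t 1" by (rule victim_eq[OF inj v1 allk])
      have injp: "inj_on (\<pi> t) {1..n2}" using perm_bij[OF tT] unfolding bij_betw_def by blast
      have "\<pi> (Suc t) ` {1..m} = \<pi> t ` (insert j ({1..m} - {1}))" using ps sw_img2[OF m1 jm] by simp
      also have "\<dots> = insert (\<pi> t j) (\<pi> t ` ({1..m} - {1}))" by simp
      also have "\<pi> t ` ({1..m} - {1}) = \<pi> t ` {1..m} - \<pi> t ` {1}"
        by (rule inj_on_image_set_diff[OF injp]) (use Suc.prems jn in auto)
      finally have "\<pi> (Suc t) ` {1..m} = insert (\<pi> t j) (CC - {\<pi> t 1})" using CC_def by simp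
      then show ?thesis using eq pn vic by simp
    qed
  qed
qed

theorem part2:
  "\<exists>(U::nat set) (rk::nat \<Rightarrow> nat) C0 \<sigma>.
     paging_setup U rk C0 \<and> request_seq U \<sigma> (enat T) \<and>
     (\<forall>t. 1 \<le> t \<and> t \<le> T \<longrightarrow> position_seq U rk C0 \<sigma> (enat T) t = h t)"
proof (intro exI conjI)
  let ?U = "{0..<n2}"
  have cU: "card ?U = n2" by simp
  show "paging_setup ?U rk (\<lambda>m. {0..<m})"
    unfolding paging_setup_def
    by (auto intro!: inj_onI rk_inj)
  show "request_seq ?U \<sigma> (enat T)"
    unfolding request_seq_def
  proof (intro allI impI)
    fix s assume s: "1 \<le> s \<and> enat s \<le> enat T"
    then have "s - 1 \<le> T" "h s \<in> {1..n2}" using hle[of s] by auto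
    then have "\<pi> (s - 1) (h s) \<in> ?U" by (rule perm_rng)
    then show "\<sigma> s \<in> ?U" by (simp add: sg_def)
  qed
  show "\<forall>t. 1 \<le> t \<and> t \<le> T \<longrightarrow> position_seq ?U rk (\<lambda>m. {0..<m}) \<sigma> (enat T) t = h t"
  proof (intro allI impI)
    fix t assume t: "1 \<le> t \<and> t \<le> T"
    have ht: "1 \<le> h t" "h t \<le> n2" using hle t by auto
    have tT: "t - 1 \<le> T" using t by (meson diff_le_self le_trans)
    have st: "\<sigma> t = \<pi> (t - 1) (h t)" by (simp add: sg_def)
    have cp: "\<And>m. m \<le> n2 \<Longrightarrow> cache \<sigma> (enat T) rk (\<lambda>m. {0..<m}) m (t - 1) = \<pi> (t - 1) ` {1..m}"
      using cache_perm[OF tT] by simp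
    have mem: "\<And>m. m \<le> n2 \<Longrightarrow> (\<sigma> t \<in> cache \<sigma> (enat T) rk (\<lambda>m. {0..<m}) m (t - 1)) = (h t \<le> m)"
      using cp perm_mem[OF tT] ht st by simp
    show "position_seq ?U rk (\<lambda>m. {0..<m}) \<sigma> (enat T) t = h t"
      unfolding position_seq_def belady_pos_def cU
    proof (rule the_equality)
      show "1 \<le> h t \<and> h t \<le> n2 \<and> \<sigma> t \<in> cache \<sigma> (enat T) rk (\<lambda>m. {0..<m}) (h t) (t - 1) \<and>
          \<sigma> t \<notin> cache \<sigma> (enat T) rk (\<lambda>m. {0..<m}) (h t - 1) (t - 1)"
        using ht mem[of "h t"] mem[of "h t - 1"] by simp
    next
      fix m assume m: "1 \<le> m \<and> m \<le> n2 \<and> \<sigma> t \<in> cache \<sigma> (enat T) rk (\<lambda>m. {0..<m}) m (t - 1) \<and>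
          \<sigma> t \<notin> cache \<sigma> (enat T) rk (\<lambda>m. {0..<m}) (m - 1) (t - 1)"
      have m1: "m - 1 \<le> n2" using m by (meson diff_le_self le_trans)
      have "h t \<le> m" using mem[of m] m by simp
      moreover have "\<not> h t \<le> m - 1" using mem[OF m1] m by simp
      ultimately show "m = h t" by simp
    qed
  qed
qed

end


theorem lemma5:
  shows "(\<forall>(U::'a set) rk C0 \<sigma> N.
            paging_setup U rk C0 \<and> request_seq U \<sigma> N \<longrightarrow>
            repeat_property (position_seq U rk C0 \<sigma> N) N)
       \<and> (\<forall>(T::nat) (h::nat \<Rightarrow> nat).
            (\<forall>t. 1 \<le> t \<and> t \<le> T \<longrightarrow> 1 \<le> h t) \<and> repeat_property h (enat T) \<longrightarrow>
            (\<exists>(U::nat set) (rk::nat \<Rightarrow> nat) C0 \<sigma>.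
               paging_setup U rk C0 \<and> request_seq U \<sigma> (enat T) \<and>
               (\<forall>t. 1 \<le> t \<and> t \<le> T \<longrightarrow> position_seq U rk C0 \<sigma> (enat T) t = h t)))"
proof (intro conjI allI impI)
  fix U :: "'a set" and rk C0 \<sigma> N
  assume a: "paging_setup U rk C0 \<and> request_seq U \<sigma> N"
  show "repeat_property (position_seq U rk C0 \<sigma> N) N"
    using pg.part1[OF pg.intro] a by blast
next
  fix T :: nat and h :: "nat \<Rightarrow> nat"
  assume a: "(\<forall>t. 1 \<le> t \<and> t \<le> T \<longrightarrow> 1 \<le> h t) \<and> repeat_property h (enat T)"
  show "\<exists>(U::nat set) (rk::nat \<Rightarrow> nat) C0 \<sigma>.
               paging_setup U rk C0 \<and> request_seq U \<sigma> (enat T) \<and>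
               (\<forall>t. 1 \<le> t \<and> t \<le> T \<longrightarrow> position_seq U rk C0 \<sigma> (enat T) t = h t)"
    using pg2.part2[OF pg2.intro] a by blast
qed

end
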